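(* Assume $\hat\omega$ lies in the interior of $\mathbb{P}_\Omega$. The vertex-direction iteration with optimal step size $\alpha_n=\hat\alpha_n$, initialized at any $\omega^{(1)}\in\mathbb{P}_\Omega$, satisfies $$\|\omega^{(n+1)}-\hat\omega\|_{\mathbf K}^2\le\|\omega^{(1)}-\hat\omega\|_{\mathbf K}^2\exp\Big(-\frac{\alpha_*^2\,n}{4R_*^2}\Big),\qquad n\ge1,$$ where $R_*=[\lambda_{\max}(\mathbf K)(1-1/\Omega)]^{1/2}$, $\alpha_*=w_*/L$, $w_*=\min_i\hat\omega_i$ and $L=(\max_i\{\mathbf K^{-1}\}_{ii})^{1/2}$.
   Context: $\mathbf K$ is a real symmetric positive definite $\Omega\times\Omega$ matrix ($\Omega\ge2$) with largest eigenvalue $\lambda_{\max}(\mathbf K)$; $\|u\|_{\mathbf K}^2=u^T\mathbf K u$. $e_i$ is the $i$-th canonical basis vector of $\mathbb{R}^\Omega$ and $\mathbb{P}_\Omega=\{\omega\in\mathbb{R}^\Omega:\omega_i\ge0,\sum_i\omega_i=1\}$. The vertex-direction iteration is $\omega^{(n+1)}=\omega^{(n)}+\alpha_n(e_{i_n^+}-\omega^{(n)})$ with $i_n^+\in\arg\min_{i}e_i^T\mathbf K(\omega^{(n)}-\hat\omega)$; the optimal step size is $\hat\alpha_n=(e_{i_n^+}-\omega^{(n)})^T\mathbf K(\hat\omega-\omega^{(n)})/\|e_{i_n^+}-\omega^{(n)}\|_{\mathbf K}^2$ (if $e_{i_n^+}=\omega^{(n)}$ the iterate is left unchanged). *)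

theory Defs
  imports "HOL-Analysis.Analysis"
begin

definition knorm2 :: "real^'n^'n \<Rightarrow> real^'n \<Rightarrow> real" where
  "knorm2 K u = u \<bullet> (K *v u)"

definition sym_posdef :: "real^'n^'n \<Rightarrow> bool" where
  "sym_posdef K \<longleftrightarrow> transpose K = K \<and> (\<forall>x. x \<noteq> 0 \<longrightarrow> x \<bullet> (K *v x) > 0)"

definition lambda_max :: "real^'n^'n \<Rightarrow> real" where
  "lambda_max K = Max {l. \<exists>v. v \<noteq> 0 \<and> K *v v = l *\<^sub>R v}"

definition prob_simplex :: "(real^'n) set" where
  "prob_simplex = {w. (\<forall>i. w $ i \<ge> 0) \<and> sum (\<lambda>i. w $ i) UNIV = 1}"

definition opt_step :: "real^'n^'n \<Rightarrow> real^'n \<Rightarrow> real^'n \<Rightarrow> 'n \<Rightarrow> real" where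
  "opt_step K what w i =
     ((axis i 1 - w) \<bullet> (K *v (what - w))) / knorm2 K (axis i 1 - w)"

definition vd_step :: "real^'n^'n \<Rightarrow> real^'n \<Rightarrow> real^'n \<Rightarrow> real^'n \<Rightarrow> bool" where
  "vd_step K what w w' \<longleftrightarrow>
     (\<exists>i. (\<forall>j. axis i 1 \<bullet> (K *v (w - what)) \<le> axis j 1 \<bullet> (K *v (w - what))) \<and>
          w' = (if axis i 1 = w then w
                else w + opt_step K what w i *\<^sub>R (axis i 1 - w)))"

end

theory Submission
  imports Defs
begin
lemma sym_dot:
  fixes K :: "real^'n^'n"
  assumes "transpose K = K"
  shows "x \<bullet> (K *v y) = y \<bullet> (K *v x)"
proof -
  have "x \<bullet> (K *v y) = (x v* K) \<bullet> y" by (simp add: dot_lmul_matrix)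
  also have "x v* K = transpose K *v x" by (simp add: transpose_matrix_vector)
  finally show ?thesis using assms by (simp add: inner_commute)
qed

lemma quad_cs:
  fixes p q r :: real
  assumes "r \<ge> 0" "\<And>t. 0 \<le> p + 2*t*q + t^2*r"
  shows "q^2 \<le> p*r"
proof (cases "r = 0")
  case True
  show ?thesis
  proof (rule ccontr)
    assume "\<not> ?thesis"
    then have "q \<noteq> 0" using True by simp
    have "0 \<le> p + 2*(-(p+1)/(2*q))*q + (-(p+1)/(2*q))^2*r" by (rule assms(2))
    also have "\<dots> = -1" using True \<open>q\<noteq>0\<close> by (simp add: field_simps)
    finally show False by simp
  qed
next
  case False
  then have r: "r > 0" using assms(1) by simp
  have "0 \<le> p + 2*(-q/r)*q + (-q/r)^2*r" by (rule assms(2))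
  also have "\<dots> = p - q^2/r" using r by (simp add: field_simps power2_eq_square)
  finally have "q^2/r \<le> p" by simp
  then show ?thesis using r by (simp add: field_simps)
qed

lemma psd_cs:
  fixes f :: "real^'n \<Rightarrow> real^'n"
  assumes lin: "linear f" and sym: "\<And>x y. x \<bullet> f y = y \<bullet> f x"
    and psd: "\<And>x. 0 \<le> x \<bullet> f x"
  shows "(x \<bullet> f y)^2 \<le> (x \<bullet> f x) * (y \<bullet> f y)"
proof -
  have "0 \<le> (x \<bullet> f x) + 2*t*(x \<bullet> f y) + t^2*(y \<bullet> f y)" for t
  proof -
    have "0 \<le> (x + t *\<^sub>R y) \<bullet> f (x + t *\<^sub>R y)" by (rule psd)
    also have "\<dots> = (x \<bullet> f x) + t*(x \<bullet> f y) + t*(y \<bullet> f x) + t^2*(y \<bullet> f y)"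
      by (simp add: linear_add[OF lin] linear_cmul[OF lin] inner_add_left inner_add_right
          power2_eq_square algebra_simps)
    finally show ?thesis using sym[of y x] by simp
  qed
  then show ?thesis using quad_cs psd by blast
qed

lemma K_cs:
  fixes K :: "real^'n^'n"
  assumes "sym_posdef K"
  shows "(x \<bullet> (K *v y))^2 \<le> knorm2 K x * knorm2 K y"
proof -
  have t: "transpose K = K" and p: "\<And>x. 0 \<le> x \<bullet> (K *v x)"
    using assms unfolding sym_posdef_def by (metis inner_zero_left less_le order_refl)+
  show ?thesis unfolding knorm2_def
    by (rule psd_cs[OF matrix_vector_mul_linear sym_dot[OF t] p])
qed

lemma knorm2_nonneg: "sym_posdef K \<Longrightarrow> 0 \<le> knorm2 K x"
  unfolding sym_posdef_def knorm2_def by (cases "x = 0") (auto simp: less_le)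

lemma eig_exists:
  fixes K :: "real^'n^'n"
  assumes t: "transpose K = K"
  shows "\<exists>\<mu> v. v \<noteq> 0 \<and> K *v v = \<mu> *\<^sub>R v \<and> (\<forall>x. x \<bullet> (K *v x) \<le> \<mu> * (x \<bullet> x))"
proof -
  let ?f = "\<lambda>x::real^'n. x \<bullet> (K *v x)"
  have ne: "sphere (0::real^'n) 1 \<noteq> {}"
  proof -
    have "axis undefined 1 \<in> sphere (0::real^'n) 1" by (simp add: norm_axis_1)
    then show ?thesis by blast
  qed
  have "continuous_on (sphere 0 1) ?f"
    by (intro continuous_intros matrix_vector_mult_linear_continuous_on)
  then obtain x0 where x0: "x0 \<in> sphere 0 1" and mx: "\<And>y. y \<in> sphere 0 1 \<Longrightarrow> ?f y \<le> ?f x0"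
    using continuous_attains_sup[OF compact_sphere ne] by blast
  define \<mu> where "\<mu> = ?f x0"
  have x0n: "x0 \<bullet> x0 = 1" using x0 by (simp add: dot_square_norm)
  have bound: "?f x \<le> \<mu> * (x \<bullet> x)" for x
  proof (cases "x = 0")
    case True then show ?thesis by simp
  next
    case False
    let ?y = "(1 / norm x) *\<^sub>R x"
    have "?y \<in> sphere 0 1" using False by simp
    then have "?f ?y \<le> \<mu>" using mx \<mu>_def by blast
    moreover have "?f ?y = ?f x / (norm x)^2"
      by (simp add: matrix_vector_mult_scaleR power2_eq_square)
    moreover have "(norm x)^2 = x \<bullet> x" by (simp add: dot_square_norm)
    moreover have "norm x > 0" using False by simp
    ultimately show ?thesis by (simp add: field_simps)
  qed
  define A where "A = (\<lambda>x. \<mu> *\<^sub>R x - K *v x)"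
  have linA: "linear A" unfolding A_def
    by (intro linearI) (auto simp: matrix_vector_right_distrib matrix_vector_mult_scaleR algebra_simps)
  have symA: "x \<bullet> A y = y \<bullet> A x" for x y
    unfolding A_def using sym_dot[OF t, of x y] by (simp add: inner_diff_right inner_commute)
  have psdA: "0 \<le> x \<bullet> A x" for x
    unfolding A_def using bound[of x] by (simp add: inner_diff_right)
  have A0: "x0 \<bullet> A x0 = 0" unfolding A_def using x0n \<mu>_def by (simp add: inner_diff_right)
  have "(A x0 \<bullet> A x0)^2 \<le> (A x0 \<bullet> A (A x0)) * (x0 \<bullet> A x0)"
    using psd_cs[OF linA symA psdA, of "A x0" x0] .
  then have "A x0 \<bullet> A x0 = 0" using A0 by simp
  then have "A x0 = 0" by simp
  then have "K *v x0 = \<mu> *\<^sub>R x0" unfolding A_def by simp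
  moreover have "x0 \<noteq> 0" using x0 by auto
  ultimately show ?thesis using bound by blast
qed

lemma eig_finite:
  fixes K :: "real^'n^'n"
  assumes t: "transpose K = K"
  shows "finite {l. \<exists>v. v \<noteq> 0 \<and> K *v v = l *\<^sub>R v}" (is "finite ?S")
proof (rule ccontr)
  assume "infinite ?S"
  then obtain T where T: "finite T" "card T = CARD('n) + 1" "T \<subseteq> ?S"
    using infinite_arbitrarily_large by blast
  define ev where "ev = (\<lambda>l. SOME v. v \<noteq> 0 \<and> K *v v = l *\<^sub>R v)"
  have ev: "ev l \<noteq> 0 \<and> K *v ev l = l *\<^sub>R ev l" if "l \<in> T" for l
  proof -
    have "\<exists>v. v \<noteq> 0 \<and> K *v v = l *\<^sub>R v" using T(3) that by blast
    then show ?thesis unfolding ev_def by (rule someI_ex)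
  qed
  have inj: "inj_on ev T"
  proof (rule inj_onI)
    fix l m assume "l \<in> T" "m \<in> T" "ev l = ev m"
    then have "l *\<^sub>R ev l = m *\<^sub>R ev l" using ev by metis
    then show "l = m" using ev[OF \<open>l \<in> T\<close>] by (simp add: scaleR_cancel_right)
  qed
  have orth: "pairwise orthogonal (ev ` T)"
  proof (clarsimp simp: pairwise_def)
    fix l m assume lm: "l \<in> T" "m \<in> T" "ev l \<noteq> ev m"
    then have "l \<noteq> m" by auto
    have "l * (ev l \<bullet> ev m) = (K *v ev l) \<bullet> ev m" using ev[OF lm(1)] by simp
    also have "\<dots> = ev m \<bullet> (K *v ev l)" by (simp add: inner_commute)
    also have "\<dots> = ev l \<bullet> (K *v ev m)" by (rule sym_dot[OF t])
    also have "\<dots> = m * (ev l \<bullet> ev m)" using ev[OF lm(2)] by simp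
    finally have "(l - m) * (ev l \<bullet> ev m) = 0" by (simp add: algebra_simps)
    then show "orthogonal (ev l) (ev m)" using \<open>l\<noteq>m\<close> by (simp add: orthogonal_def)
  qed
  have "0 \<notin> ev ` T" using ev by auto
  then have "independent (ev ` T)" using pairwise_orthogonal_independent orth by blast
  then have "card (ev ` T) \<le> DIM(real^'n)" using independent_bound by blast
  then show False using card_image[OF inj] T(2) by simp
qed

lemma lambda_max_bound:
  fixes K :: "real^'n^'n"
  assumes t: "transpose K = K"
  shows "x \<bullet> (K *v x) \<le> lambda_max K * (x \<bullet> x)"
proof -
  obtain \<mu> v where mv: "v \<noteq> 0" "K *v v = \<mu> *\<^sub>R v" "\<forall>x. x \<bullet> (K *v x) \<le> \<mu> * (x \<bullet> x)"
    using eig_exists[OF t] by blast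
  have "\<mu> \<le> lambda_max K" unfolding lambda_max_def
    using eig_finite[OF t] mv(1,2) by (intro Max_ge) auto
  then show ?thesis using mv(3) by (metis inner_ge_zero mult_right_mono order_trans)
qed

lemma real_key:
  fixes a al BB R sv V :: real
  assumes "a \<ge> 0" "al \<ge> 0" "BB \<ge> 0" "R > 0" "BB \<le> 2*R" "al \<le> 2*R"
    "sv \<ge> al*a + a^2" "0 < V" "V \<le> (BB + a)^2"
  shows "al^2 * a^2 / (4*R^2) \<le> sv^2 / V"
proof -
  have "BB*(al*a) \<le> (2*R)*(al*a)" using assms by (intro mult_right_mono) simp_all
  then have "al*a*BB \<le> 2*R*(al*a)" by (simp add: mult.commute)
  moreover have "al*a^2 \<le> 2*R*a^2" using assms by (simp add: mult_right_mono)
  ultimately have "al*a*(BB+a) \<le> 2*R* sv" using assms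
    by (smt (verit) distrib_left mult.assoc mult_left_mono power2_eq_square)
  then have 1: "(al*a/(2*R))*(BB+a) \<le> sv" using assms(4) by (simp add: field_simps)
  have nn: "0 \<le> (al*a/(2*R))*(BB+a)" using assms by simp
  have "(al*a/(2*R))^2*(BB+a)^2 \<le> sv^2"
    using power_mono[OF 1 nn, of 2] by (simp only: power_mult_distrib)
  then have "(al*a/(2*R))^2 * V \<le> sv^2"
    by (meson order_trans mult_left_mono assms(9) zero_le_power2)
  then have "(al*a/(2*R))^2 \<le> sv^2 / V" using assms(8) by (simp add: field_simps)
  then show ?thesis by (simp add: power_mult_distrib power_divide)
qed

lemma step:
  fixes K :: "real^'n^'n" and what w w' :: "real^'n"
  assumes n2: "CARD('n) \<ge> 2" and pd: "sym_posdef K"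
    and ws: "what \<in> prob_simplex" and pos: "\<forall>i. what $ i > 0"
    and sw: "sum (\<lambda>i. w $ i) UNIV = 1"
    and st: "vd_step K what w w'"
  shows "sum (\<lambda>i. w' $ i) UNIV = 1 \<and>
    knorm2 K (w' - what) \<le> knorm2 K (w - what) *
      exp (- ((Min (range (\<lambda>i. what $ i)) / sqrt (Max (range (\<lambda>i. matrix_inv K $ i $ i))))\<^sup>2
               / (4 * (sqrt (lambda_max K * (1 - 1 / real CARD('n))))\<^sup>2)))"
proof -
  have tK: "transpose K = K" using pd unfolding sym_posdef_def by simp
  have posK: "x \<noteq> 0 \<Longrightarrow> knorm2 K x > 0" for x using pd unfolding sym_posdef_def knorm2_def by simp
  have nnK: "0 \<le> knorm2 K x" for x using knorm2_nonneg[OF pd] .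
  have symK: "x \<bullet> (K *v y) = y \<bullet> (K *v x)" for x y using sym_dot[OF tK] .
  have lamb: "knorm2 K x \<le> lambda_max K * (x \<bullet> x)" for x
    unfolding knorm2_def using lambda_max_bound[OF tK] .
  define M where "M = matrix_inv K"
  have "\<forall>x. K *v x = 0 \<longrightarrow> x = 0" using posK unfolding knorm2_def by fastforce
  then have "invertible K" using matrix_left_invertible_ker invertible_left_inverse by blast
  then have "\<exists>A'. K ** A' = mat 1 \<and> A' ** K = mat 1" unfolding invertible_def .
  then have "K ** M = mat 1" unfolding M_def matrix_inv_def by (metis (mono_tags, lifting) someI_ex)
  then have KM: "K *v (M *v y) = y" for y by (metis matrix_vector_mul_assoc matrix_vector_mul_lid)
  define e where "e = (\<lambda>j::'n. axis j (1::real))"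
  define u where "u = (\<lambda>j. M *v e j)"
  have Ku: "K *v u j = e j" for j unfolding u_def by (rule KM)
  have knu: "knorm2 K (u j) = M $ j $ j" for j
  proof -
    have "knorm2 K (u j) = u j \<bullet> e j" by (simp add: knorm2_def Ku)
    also have "\<dots> = (u j) $ j" unfolding e_def by (simp add: inner_axis)
    finally show ?thesis unfolding u_def e_def by (simp add: matrix_vector_mult_basis column_def)
  qed
  have ee: "e j \<bullet> e j = 1" for j unfolding e_def by (simp add: inner_axis_axis)
  have lam_pos: "lambda_max K > 0"
  proof -
    have "0 < knorm2 K (e undefined)" using posK unfolding e_def by (simp add: axis_eq_0_iff)
    also have "\<dots> \<le> lambda_max K" using lamb[of "e undefined"] ee by simp
    finally show ?thesis .
  qed
  define lam where "lam = lambda_max K"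
  have Mpos0: "0 \<le> M $ j $ j" for j using knu[of j] nnK[of "u j"] by simp
  have Mlow: "1 \<le> lam * M $ j $ j" for j
  proof -
    have "(e j \<bullet> (K *v u j))^2 \<le> knorm2 K (e j) * knorm2 K (u j)" by (rule K_cs[OF pd])
    also have "\<dots> \<le> lam * M $ j $ j"
      using lamb[of "e j"] ee knu nnK Mpos0 lam_def by (simp add: mult_right_mono)
    finally show ?thesis using Ku ee by simp
  qed
  have Mpos: "M $ j $ j > 0" for j
  proof (rule ccontr)
    assume "\<not> M $ j $ j > 0"
    then have "M $ j $ j \<le> 0" by simp
    then have "lam * M $ j $ j \<le> 0" using lam_pos lam_def by (simp add: mult_nonneg_nonpos)
    then show False using Mlow[of j] by simp
  qed
  define Lsq where "Lsq = Max (range (\<lambda>i. M $ i $ i))"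
  have Lsq_ge: "M $ j $ j \<le> Lsq" for j unfolding Lsq_def by (rule Max_ge) auto
  have Lsq_lam: "1 \<le> lam * Lsq" using Mlow[of undefined] Lsq_ge[of undefined] lam_pos lam_def
    by (smt (verit) mult_left_mono)
  have Lsq_pos: "Lsq > 0" using Mpos Lsq_ge by (meson order_less_le_trans)
  define L where "L = sqrt Lsq"
  have L_pos: "L > 0" and LL: "L^2 = Lsq" using Lsq_pos unfolding L_def by auto
  define wmin where "wmin = Min (range (\<lambda>i. what $ i))"
  have wmin_le: "wmin \<le> what $ j" for j unfolding wmin_def by (rule Min_le) auto
  have "wmin \<in> range (\<lambda>i. what $ i)" unfolding wmin_def by (rule Min_in) auto
  then have wmin_pos: "wmin > 0" using pos by auto
  have wsum: "sum (\<lambda>i. what $ i) UNIV = 1" and wnn: "\<And>i. what $ i \<ge> 0"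
    using ws unfolding prob_simplex_def by auto
  have w_le1: "what $ j \<le> 1" for j
    using member_le_sum[of j UNIV "\<lambda>i. what $ i"] wnn wsum by simp
  have wmin_le1: "wmin \<le> 1" using wmin_le[of undefined] w_le1[of undefined] by simp
  define al where "al = wmin / L"
  have al_nn: "al \<ge> 0" using wmin_pos L_pos al_def by simp
  define R2 where "R2 = lam * (1 - 1 / real CARD('n))"
  have half: "1 - 1 / real CARD('n) \<ge> 1/2" using n2 by (simp add: field_simps)
  have R2_ge: "2 * lam \<le> 4 * R2"
  proof -
    have "lam * (1/2) \<le> lam * (1 - 1 / real CARD('n))"
      using half lam_pos lam_def by (intro mult_left_mono) simp_all
    then show ?thesis unfolding R2_def by linarith
  qed
  have R2_pos: "R2 > 0" using R2_ge lam_pos lam_def by simp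
  define R where "R = sqrt R2"
  have R_pos: "R > 0" and RR: "R^2 = R2" using R2_pos unfolding R_def by auto
  have al2: "al^2 \<le> 4 * R^2"
  proof -
    have "al^2 = wmin^2 / Lsq" unfolding al_def using LL by (simp add: power_divide)
    also have "\<dots> \<le> 1 / Lsq" using wmin_pos wmin_le1 Lsq_pos
      by (simp add: divide_right_mono power_le_one)
    also have "\<dots> \<le> lam" using Lsq_lam Lsq_pos by (simp add: field_simps)
    finally show ?thesis using R2_ge RR lam_pos lam_def by simp
  qed
  have al_le: "al \<le> 2 * R"
  proof (rule power2_le_imp_le)
    show "al^2 \<le> (2 * R)^2" using al2 by (simp add: power_mult_distrib)
  qed (use R_pos in simp)
  define c where "c = al^2 / (4 * R^2)"
  have c_eq: "c = (Min (range (\<lambda>i. what $ i)) / sqrt (Max (range (\<lambda>i. matrix_inv K $ i $ i))))\<^sup>2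
               / (4 * (sqrt (lambda_max K * (1 - 1 / real CARD('n))))\<^sup>2)"
    unfolding c_def al_def wmin_def L_def Lsq_def M_def R_def R2_def lam_def ..
  obtain i where imin: "\<forall>j. axis i 1 \<bullet> (K *v (w - what)) \<le> axis j 1 \<bullet> (K *v (w - what))"
    and w'def: "w' = (if axis i 1 = w then w else w + opt_step K what w i *\<^sub>R (axis i 1 - w))"
    using st unfolding vd_step_def by blast
  define d where "d = w - what"
  define g where "g = K *v d"
  have gmin: "g $ i \<le> g $ j" for j using imin unfolding g_def d_def by (simp add: inner_axis')
  define a2 where "a2 = knorm2 K d"
  have a2_nn: "a2 \<ge> 0" unfolding a2_def by (rule nnK)
  define a where "a = sqrt a2"
  have a_nn: "a \<ge> 0" and aa: "a^2 = a2" using a2_nn unfolding a_def by auto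
  have dsum: "sum (\<lambda>j. d $ j) UNIV = 0" unfolding d_def using sw wsum by (simp add: sum_subtractf)
  define h where "h = (\<lambda>j. g $ j - g $ i)"
  have h_nn: "h j \<ge> 0" for j unfolding h_def using gmin by simp
  define H where "H = sum h UNIV"
  have a2h: "a2 = (\<Sum>j\<in>UNIV. d $ j * h j)"
  proof -
    have "(\<Sum>j\<in>UNIV. d $ j * h j) = (\<Sum>j\<in>UNIV. d $ j * g $ j) - g $ i * (\<Sum>j\<in>UNIV. d $ j)"
      unfolding h_def by (simp add: algebra_simps sum_subtractf sum_distrib_left)
    also have "\<dots> = a2" using dsum unfolding a2_def knorm2_def g_def inner_vec_def by simp
    finally show ?thesis by simp
  qed
  have dle: "d $ j \<le> a * L" for j
  proof -
    have "d $ j = d \<bullet> (K *v u j)" using Ku unfolding e_def by (simp add: inner_axis)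
    then have "(d $ j)^2 \<le> a2 * M $ j $ j" using K_cs[OF pd, of d "u j"] knu a2_def by simp
    also have "\<dots> \<le> a2 * Lsq" using Lsq_ge a2_nn by (simp add: mult_left_mono)
    finally have "sqrt ((d $ j)^2) \<le> sqrt (a2 * Lsq)" by (rule real_sqrt_le_mono)
    then show ?thesis unfolding a_def L_def by (simp add: real_sqrt_mult)
  qed
  have aLH: "a \<le> L * H"
  proof (cases "a = 0")
    case True then show ?thesis using L_pos h_nn unfolding H_def by (simp add: sum_nonneg)
  next
    case False
    have "a * a = a2" using aa by (simp add: power2_eq_square)
    also have "\<dots> \<le> (\<Sum>j\<in>UNIV. (a * L) * h j)" unfolding a2h
      by (rule sum_mono) (simp add: dle h_nn mult_right_mono)
    also have "\<dots> = a * (L * H)" unfolding H_def by (simp add: sum_distrib_left mult.assoc)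
    finally show ?thesis using False a_nn by simp
  qed
  define s where "s = - ((axis i 1 - w) \<bullet> g)"
  have s_eq: "s = (\<Sum>j\<in>UNIV. what $ j * h j) + a2"
  proof -
    have "(\<Sum>j\<in>UNIV. what $ j * h j) = (\<Sum>j\<in>UNIV. what $ j * g $ j) - g $ i"
      unfolding h_def using wsum by (simp add: algebra_simps sum_subtractf sum_distrib_left[symmetric])
    moreover have "s = w \<bullet> g - g $ i" unfolding s_def by (simp add: inner_diff_left inner_axis')
    moreover have "w \<bullet> g = what \<bullet> g + a2" unfolding a2_def knorm2_def g_def d_def
      by (simp add: inner_diff_left)
    ultimately show ?thesis by (simp add: inner_vec_def)
  qed
  have s_ge: "s \<ge> al * a + a2"
  proof -
    have "wmin * H \<le> (\<Sum>j\<in>UNIV. what $ j * h j)" unfolding H_def sum_distrib_left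
      by (rule sum_mono) (simp add: wmin_le h_nn mult_right_mono)
    moreover have "al * a \<le> wmin * H"
    proof -
      have "al * a = wmin * (a / L)" unfolding al_def by simp
      also have "\<dots> \<le> wmin * H" using aLH L_pos wmin_pos
        by (simp add: mult_left_mono divide_le_eq mult.commute)
      finally show ?thesis .
    qed
    ultimately show ?thesis using s_eq by simp
  qed
  define b where "b = axis i 1 - what"
  define B2 where "B2 = knorm2 K b"
  define Bn where "Bn = sqrt B2"
  have B_nn: "Bn \<ge> 0" and BB: "Bn^2 = B2" using nnK unfolding Bn_def B2_def by auto
  have bb: "b \<bullet> b \<le> 2"
  proof -
    have "b \<bullet> b = 1 - 2 * what $ i + what \<bullet> what" unfolding b_def
      by (simp add: inner_diff_left inner_diff_right inner_axis inner_axis' inner_axis_axis inner_commute)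
    moreover have "what \<bullet> what \<le> 1"
    proof -
      have "what \<bullet> what = (\<Sum>j\<in>UNIV. what $ j * what $ j)" by (simp add: inner_vec_def)
      also have "\<dots> \<le> (\<Sum>j\<in>UNIV. what $ j)"
        by (rule sum_mono) (metis mult_right_le_one_le w_le1 wnn)
      finally show ?thesis using wsum by simp
    qed
    ultimately show ?thesis using wnn[of i] by simp
  qed
  have B_le: "Bn \<le> 2 * R"
  proof -
    have "B2 \<le> lam * (b \<bullet> b)" unfolding B2_def lam_def by (rule lamb)
    also have "\<dots> \<le> lam * 2" using bb lam_pos lam_def by (simp add: mult_left_mono)
    also have "\<dots> \<le> (2*R)^2" using R2_ge RR by (simp add: power_mult_distrib)
    finally have "Bn^2 \<le> (2*R)^2" using BB by simp
    then show ?thesis using R_pos by (metis power2_le_imp_le less_eq_real_def mult_pos_pos zero_less_numeral)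
  qed
  define v where "v = axis i 1 - w"
  have vbd: "v = b - d" unfolding v_def b_def d_def by simp
  define V where "V = knorm2 K v"
  have V_le: "V \<le> (Bn + a)^2"
  proof -
    have "V = B2 - 2 * (b \<bullet> (K *v d)) + a2" unfolding V_def vbd B2_def a2_def knorm2_def
      using symK[of b d] by (simp add: matrix_vector_mult_diff_distrib inner_diff_left inner_diff_right)
    moreover have "\<bar>b \<bullet> (K *v d)\<bar> \<le> Bn * a"
    proof -
      have "(b \<bullet> (K *v d))^2 \<le> B2 * a2" using K_cs[OF pd] B2_def a2_def by simp
      then have "sqrt ((b \<bullet> (K *v d))^2) \<le> sqrt (B2 * a2)" by (rule real_sqrt_le_mono)
      then show ?thesis unfolding Bn_def a_def by (simp add: real_sqrt_mult)
    qed
    ultimately show ?thesis using BB aa by (simp add: power2_eq_square algebra_simps)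
  qed
  show ?thesis
  proof (cases "axis i 1 = w")
    case True
    then have "s = 0" unfolding s_def by simp
    then have "a2 = 0" using s_ge al_nn a_nn a2_nn by (smt (verit) mult_nonneg_nonneg)
    then show ?thesis using True w'def sw unfolding a2_def d_def by simp
  next
    case False
    then have vnz: "v \<noteq> 0" unfolding v_def by simp
    have V_pos: "V > 0" unfolding V_def using posK vnz by simp
    define t where "t = opt_step K what w i"
    have t_eq: "t = s / V"
    proof -
      have "(axis i 1 - w) \<bullet> (K *v (what - w)) = s"
        unfolding s_def g_def d_def
        by (simp add: matrix_vector_mult_diff_distrib inner_diff_right)
      then show ?thesis unfolding t_def opt_step_def V_def v_def by simp
    qed
    have w'eq: "w' = w + t *\<^sub>R v" using w'def False unfolding t_def v_def by simp
    have vKd: "v \<bullet> (K *v d) = - s" unfolding s_def g_def v_def by simp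
    have new: "knorm2 K (w' - what) = a2 - s^2 / V"
    proof -
      have "w' - what = d + t *\<^sub>R v" unfolding w'eq d_def by simp
      then have "knorm2 K (w' - what) = a2 + 2 * t * (v \<bullet> (K *v d)) + t^2 * V"
        unfolding knorm2_def a2_def V_def using symK[of d v]
        by (simp add: matrix_vector_right_distrib matrix_vector_mult_scaleR inner_add_left
            inner_add_right power2_eq_square algebra_simps)
      also have "\<dots> = a2 - s^2 / V" unfolding vKd t_eq using V_pos
        by (simp add: field_simps power2_eq_square)
      finally show ?thesis .
    qed
    have key: "c * a2 \<le> s^2 / V"
    proof -
      have "al^2 * a^2 / (4*R^2) \<le> s^2 / V"
        by (rule real_key[OF a_nn al_nn B_nn R_pos B_le al_le _ V_pos V_le]) (use s_ge aa in simp)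
      then show ?thesis unfolding c_def aa by (simp add: field_simps)
    qed
    have "knorm2 K (w' - what) \<le> a2 * (1 - c)" using new key by (simp add: algebra_simps)
    also have "\<dots> \<le> a2 * exp (- c)"
      using a2_nn exp_ge_add_one_self[of "-c"] by (simp add: mult_left_mono)
    finally have ineq: "knorm2 K (w' - what) \<le> knorm2 K (w - what) * exp (- c)"
      unfolding a2_def d_def .
    have "sum (\<lambda>j. w' $ j) UNIV = 1"
      unfolding w'eq v_def using sw by (simp add: sum.distrib sum_subtractf sum_distrib_left[symmetric] axis_def)
    then show ?thesis using ineq c_eq by simp
  qed
qed

theorem lemmaA6:
  fixes K :: "real^'n^'n" and what :: "real^'n" and \<omega> :: "nat \<Rightarrow> real^'n"
  assumes "CARD('n) \<ge> 2"
    and "sym_posdef K"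
    and "what \<in> prob_simplex" and "\<forall>i. what $ i > 0"
    and "\<omega> 1 \<in> prob_simplex"
    and "\<forall>n\<ge>1. vd_step K what (\<omega> n) (\<omega> (Suc n))"
  shows "\<forall>n\<ge>1.
    knorm2 K (\<omega> (Suc n) - what)
      \<le> knorm2 K (\<omega> 1 - what) *
         exp (- (((Min (range (\<lambda>i. what $ i)) / sqrt (Max (range (\<lambda>i. matrix_inv K $ i $ i))))\<^sup>2 * real n)
                 / (4 * (sqrt (lambda_max K * (1 - 1 / real CARD('n))))\<^sup>2)))"
proof -
  define A where "A = (Min (range (\<lambda>i. what $ i)) / sqrt (Max (range (\<lambda>i. matrix_inv K $ i $ i))))\<^sup>2"
  define D where "D = 4 * (sqrt (lambda_max K * (1 - 1 / real CARD('n))))\<^sup>2"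
  have stp: "sum (\<lambda>i. w $ i) UNIV = 1 \<Longrightarrow> vd_step K what w w' \<Longrightarrow>
     sum (\<lambda>i. w' $ i) UNIV = 1 \<and> knorm2 K (w' - what) \<le> knorm2 K (w - what) * exp (- (A / D))" for w w'
    using step[OF assms(1-4)] unfolding A_def D_def by blast
  have P: "sum (\<lambda>i. \<omega> (Suc n) $ i) UNIV = 1 \<and>
      knorm2 K (\<omega> (Suc n) - what) \<le> knorm2 K (\<omega> 1 - what) * exp (- (A * real n / D))" for n
  proof (induction n)
    case 0
    then show ?case using assms(5) unfolding prob_simplex_def by simp
  next
    case (Suc n)
    have "vd_step K what (\<omega> (Suc n)) (\<omega> (Suc (Suc n)))" using assms(6) by simp
    from stp[OF Suc.IH[THEN conjunct1] this]
    have s1: "sum (\<lambda>i. \<omega> (Suc (Suc n)) $ i) UNIV = 1"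
      and s2: "knorm2 K (\<omega> (Suc (Suc n)) - what) \<le> knorm2 K (\<omega> (Suc n) - what) * exp (- (A / D))"
      by auto
    have "knorm2 K (\<omega> (Suc (Suc n)) - what) \<le> knorm2 K (\<omega> 1 - what) * exp (- (A * real n / D)) * exp (- (A / D))"
      using s2 Suc.IH by (meson exp_ge_zero mult_right_mono order_trans)
    also have "\<dots> = knorm2 K (\<omega> 1 - what) * exp (- (A * real (Suc n) / D))"
      by (simp add: mult.assoc exp_add[symmetric] add_divide_distrib distrib_left algebra_simps)
    finally show ?case using s1 by simp
  qed
  show ?thesis using P unfolding A_def D_def by blast
qed

end
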